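(* Let $k$ be a natural number, let $(X,\Sigma)$ be a measurable space, and let $\mu,\nu$ be finite measures on $(X,\Sigma)$ with $\mu$ absolutely continuous with respect to $\nu$; let $f\colon X\to[0,\infty)$ be a (measurable) Radon–Nikodym derivative $f=\frac{d\mu}{d\nu}$. Assume that one of the following holds: (I) $G=\mathbb{R}$ and $\nu$ is non-atomic; or (II) $G=\mathbb{Z}$, $X$ is finite, $\Sigma=2^X$, and $\nu$ is the counting measure. Let $q=(q_1,\dots,q_k)\in(G\cap[0,\infty))^k$ satisfy $q_1+\dots+q_k=\nu(X)$, and let $s_1\le s_2\le\dots\le s_k$ be real numbers. For $P=(A_1,\dots,A_k)\in\mathcal{P}_{\nu,q}$ define the score $s(P):=\sum_{i=1}^k s_i\,\mu(A_i)$. Let $Q=(B_1,\dots,B_k)\in\mathcal{P}_{\nu,q}$ be any partition such that $\sup_{B_i}f\le\inf_{B_j}f$ for all $i,j\in[k]$ with $i<j$ (with the conventions $\sup\emptyset=-\infty$, $\inf\emptyset=\infty$). Then $s(Q)\ge s(P)$ for every $P\in\mathcal{P}_{\nu,q}$.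
   Context: $[k]:=\{1,\dots,k\}$. $\mathcal{P}_k$ denotes the set of all ordered partitions $P=(A_1,\dots,A_k)$ of $X$ with $A_i\in\Sigma$ for all $i$ (i.e. the $A_i$ are pairwise disjoint measurable sets, possibly empty, whose union is $X$). $\mathcal{P}_{\nu,q}:=\{P=(A_1,\dots,A_k)\in\mathcal{P}_k:\ \nu(A_i)=q_i\ \text{for all } i\in[k]\}$. *)

theory Defs
  imports "HOL-Probability.Probability"
begin

definition is_atom :: "'a measure \<Rightarrow> 'a set \<Rightarrow> bool" where
  "is_atom N A \<longleftrightarrow> A \<in> sets N \<and> emeasure N A > 0 \<and>
     (\<forall>B\<in>sets N. B \<subseteq> A \<longrightarrow> emeasure N B = 0 \<or> emeasure N B = emeasure N A)"

definition non_atomic :: "'a measure \<Rightarrow> bool" where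
  "non_atomic N \<longleftrightarrow> \<not> (\<exists>A. is_atom N A)"

text \<open>Ordered partitions (A_1,...,A_k) of the space of N into measurable sets,
indexed by 1..k (values outside 1..k are irrelevant).\<close>
definition ordered_partition :: "'a measure \<Rightarrow> nat \<Rightarrow> (nat \<Rightarrow> 'a set) \<Rightarrow> bool" where
  "ordered_partition N k P \<longleftrightarrow>
     (\<forall>i\<in>{1..k}. P i \<in> sets N) \<and>
     (\<forall>i\<in>{1..k}. \<forall>j\<in>{1..k}. i \<noteq> j \<longrightarrow> P i \<inter> P j = {}) \<and>
     (\<Union>i\<in>{1..k}. P i) = space N"

definition partitions_nu_q :: "'a measure \<Rightarrow> nat \<Rightarrow> (nat \<Rightarrow> real) \<Rightarrow> (nat \<Rightarrow> 'a set) \<Rightarrow> bool" where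
  "partitions_nu_q N k q P \<longleftrightarrow> ordered_partition N k P \<and> (\<forall>i\<in>{1..k}. measure N (P i) = q i)"

definition score :: "'a measure \<Rightarrow> nat \<Rightarrow> (nat \<Rightarrow> real) \<Rightarrow> (nat \<Rightarrow> 'a set) \<Rightarrow> real" where
  "score M k s P = (\<Sum>i=1..k. s i * measure M (P i))"

end

theory Submission
  imports Defs
begin

lemma key:
  fixes N :: "'a measure" and f :: "'a \<Rightarrow> real"
  assumes finN: "finite_measure N" and U: "U \<in> sets N" and V: "V \<in> sets N"
    and eq: "measure N U = measure N V"
    and ord: "\<And>x y. x \<in> U \<Longrightarrow> y \<in> space N - U \<Longrightarrow> f y \<le> f x"
    and f_meas: "f \<in> borel_measurable N" and f_nonneg: "\<And>x. x \<in> space N \<Longrightarrow> f x \<ge> 0"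
  shows "emeasure (density N (\<lambda>x. ennreal (f x))) V \<le> emeasure (density N (\<lambda>x. ennreal (f x))) U"
proof -
  interpret finite_measure N by fact
  define D where "D = density N (\<lambda>x. ennreal (f x))"
  define A where "A = U - V"
  define B where "B = V - U"
  define C where "C = U \<inter> V"
  have sA: "A \<in> sets N" and sB: "B \<in> sets N" and sC: "C \<in> sets N" using U V by (auto simp: A_def B_def C_def)
  have "measure N U = measure N C + measure N A"
    using finite_measure_Union[OF sC sA] by (simp add: A_def C_def Int_Diff_Un Diff_disjoint Int_assoc)
  moreover have "measure N V = measure N C + measure N B"
  proof -
    have "C \<inter> B = {}" "C \<union> B = V" by (auto simp: B_def C_def)
    then show ?thesis using finite_measure_Union[OF sC sB] by simp
  qed
  ultimately have mAB: "emeasure N A = emeasure N B" using eq by (simp add: emeasure_eq_measure)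
  have sD: "sets D = sets N" by (simp add: D_def)
  have fm: "(\<lambda>x. ennreal (f x)) \<in> borel_measurable N" using f_meas by simp
  have BA: "emeasure D B \<le> emeasure D A"
  proof (cases "B = {}")
    case True then show ?thesis by simp
  next
    case Bne: False
    show ?thesis
    proof (cases "A = {}")
      case True
      then have "B \<in> null_sets N" using mAB sB by auto
      then have "emeasure D B = 0" unfolding D_def
        by (simp add: emeasure_density[OF fm sB] nn_integral_null_set)
      then show ?thesis by simp
    next
      case False
      then obtain a where a: "a \<in> A" by auto
      have BL: "B \<subseteq> space N - U" using sB sets.sets_into_space by (auto simp: B_def)
      have AU: "A \<subseteq> U" by (auto simp: A_def)
      define c where "c = Sup (f ` B)"
      have bdd: "bdd_above (f ` B)" using ord a AU BL by (intro bdd_aboveI[of _ "f a"]) auto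
      have cB: "f y \<le> c" if "y \<in> B" for y unfolding c_def using bdd that by (intro cSup_upper) auto
      have cA: "c \<le> f x" if "x \<in> A" for x unfolding c_def using Bne ord that AU BL
        by (intro cSup_least) auto
      have "emeasure D B = (\<integral>\<^sup>+ x. ennreal (f x) * indicator B x \<partial>N)"
        unfolding D_def by (rule emeasure_density[OF fm sB])
      also have "\<dots> \<le> (\<integral>\<^sup>+ x. ennreal c * indicator B x \<partial>N)"
        by (intro nn_integral_mono) (auto simp: indicator_def cB ennreal_leI)
      also have "\<dots> = ennreal c * emeasure N B" by (rule nn_integral_cmult_indicator[OF sB])
      also have "\<dots> = (\<integral>\<^sup>+ x. ennreal c * indicator A x \<partial>N)"
        using nn_integral_cmult_indicator[OF sA] mAB by simp
      also have "\<dots> \<le> (\<integral>\<^sup>+ x. ennreal (f x) * indicator A x \<partial>N)"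
        by (intro nn_integral_mono) (auto simp: indicator_def cA ennreal_leI)
      also have "\<dots> = emeasure D A"
        unfolding D_def by (rule emeasure_density[OF fm sA, symmetric])
      finally show ?thesis .
    qed
  qed
  have "emeasure D V = emeasure D C + emeasure D B"
  proof -
    have "C \<inter> B = {}" "C \<union> B = V" by (auto simp: B_def C_def)
    then show ?thesis using plus_emeasure[of C D B] sC sB sD by simp
  qed
  also have "\<dots> \<le> emeasure D C + emeasure D A" using BA by (rule add_left_mono)
  also have "\<dots> = emeasure D U"
  proof -
    have "C \<inter> A = {}" "C \<union> A = U" by (auto simp: A_def C_def)
    then show ?thesis using plus_emeasure[of C D A] sC sA sD by simp
  qed
  finally show ?thesis unfolding D_def .
qed

lemma abel:
  fixes s a :: "nat \<Rightarrow> real"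
  shows "(\<Sum>i=1..k. s i * a i) = s 0 * (\<Sum>i=1..k. a i) + (\<Sum>j=1..k. (s j - s (j-1)) * (\<Sum>i=j..k. a i))"
proof (induction k)
  case 0 then show ?case by simp
next
  case (Suc k)
  have tel: "(\<Sum>j=1..Suc k. (s j - s (j-1))) = s (Suc k) - s 0"
    by (induction k) (auto simp: sum.atLeast_Suc_atMost_Suc_shift)
  have "(\<Sum>j=1..Suc k. (s j - s (j-1)) * (\<Sum>i=j..Suc k. a i))
     = (\<Sum>j=1..Suc k. (s j - s (j-1)) * ((\<Sum>i=j..k. a i) + a (Suc k)))"
    by (intro sum.cong) auto
  also have "\<dots> = (\<Sum>j=1..k. (s j - s (j-1)) * ((\<Sum>i=j..k. a i) + a (Suc k))) + (s (Suc k) - s k) * a (Suc k)"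
    by simp
  also have "\<dots> = (\<Sum>j=1..k. (s j - s (j-1)) * (\<Sum>i=j..k. a i)) + (\<Sum>j=1..k. (s j - s (j-1))) * a (Suc k) + (s (Suc k) - s k) * a (Suc k)"
    by (simp only: distrib_left sum.distrib sum_distrib_right)
  also have "\<dots> = (\<Sum>j=1..k. (s j - s (j-1)) * (\<Sum>i=j..k. a i)) + (\<Sum>j=1..Suc k. (s j - s (j-1))) * a (Suc k)"
    by (simp add: algebra_simps)
  finally have X: "(\<Sum>j=1..Suc k. (s j - s (j-1)) * (\<Sum>i=j..Suc k. a i)) = (\<Sum>j=1..k. (s j - s (j-1)) * (\<Sum>i=j..k. a i)) + (s (Suc k) - s 0) * a (Suc k)"
    by (simp only: tel)
  have Y: "s 0 * (\<Sum>i=1..Suc k. a i) = s 0 * (\<Sum>i=1..k. a i) + s 0 * a (Suc k)"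
    by (simp add: distrib_left)
  have Z: "(\<Sum>i=1..Suc k. s i * a i) = (\<Sum>i=1..k. s i * a i) + s (Suc k) * a (Suc k)" by simp
  show ?case unfolding X Y Z Suc.IH by (simp add: left_diff_distrib)
qed

lemma part_sum:
  assumes R: "ordered_partition N k R" and X: "finite_measure X" and sX: "sets X = sets N"
    and j: "1 \<le> j"
  shows "measure X (\<Union>i\<in>{j..k}. R i) = (\<Sum>i=j..k. measure X (R i))"
proof -
  interpret X: finite_measure X by fact
  show ?thesis
  proof (rule measure_finite_Union)
    show "R ` {j..k} \<subseteq> sets X" using R j sX by (auto simp: ordered_partition_def)
    show "disjoint_family_on R {j..k}" using R j by (auto simp: ordered_partition_def disjoint_family_on_def)
  qed (auto simp: X.emeasure_eq_measure)
qed

theorem theorem3: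
  fixes k :: nat and M N :: "'a measure" and f :: "'a \<Rightarrow> real"
    and q s :: "nat \<Rightarrow> real" and Q :: "nat \<Rightarrow> 'a set"
  assumes finM: "finite_measure M" and finN: "finite_measure N"
    and sets_eq: "sets M = sets N"
    and ac: "absolutely_continuous N M"
    and f_meas: "f \<in> borel_measurable N" and f_nonneg: "\<And>x. x \<in> space N \<Longrightarrow> f x \<ge> 0"
    and RN: "M = density N (\<lambda>x. ennreal (f x))"
    and cases: "(non_atomic N \<and> (\<forall>i\<in>{1..k}. q i \<ge> 0))
              \<or> (finite (space N) \<and> sets N = Pow (space N) \<and> N = count_space (space N)
                 \<and> (\<forall>i\<in>{1..k}. q i \<in> \<int> \<and> q i \<ge> 0))"
    and q_sum: "(\<Sum>i=1..k. q i) = measure N (space N)"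
    and s_mono: "\<And>i j. i \<in> {1..k} \<Longrightarrow> j \<in> {1..k} \<Longrightarrow> i \<le> j \<Longrightarrow> s i \<le> s j"
    and Q_part: "partitions_nu_q N k q Q"
    and Q_sorted: "\<And>i j. i \<in> {1..k} \<Longrightarrow> j \<in> {1..k} \<Longrightarrow> i < j \<Longrightarrow>
                     Sup ((\<lambda>x. ereal (f x)) ` Q i) \<le> Inf ((\<lambda>x. ereal (f x)) ` Q j)"
  shows "\<forall>P. partitions_nu_q N k q P \<longrightarrow> score M k s Q \<ge> score M k s P"
proof (intro allI impI)
  fix P assume Ppart: "partitions_nu_q N k q P"
  interpret N: finite_measure N by fact
  interpret M: finite_measure M by fact
  have Pp: "ordered_partition N k P" and Pq: "\<And>i. i \<in> {1..k} \<Longrightarrow> measure N (P i) = q i"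
    using Ppart by (auto simp: partitions_nu_q_def)
  have Qp: "ordered_partition N k Q" and Qq: "\<And>i. i \<in> {1..k} \<Longrightarrow> measure N (Q i) = q i"
    using Q_part by (auto simp: partitions_nu_q_def)
  have sM: "sets M = sets N" by fact
  define UQ where "UQ j = (\<Union>i\<in>{j..k}. Q i)" for j
  define UP where "UP j = (\<Union>i\<in>{j..k}. P i)" for j
  have TQ: "(\<Sum>i=j..k. measure M (Q i)) = measure M (UQ j)" if "1 \<le> j" for j
    using part_sum[OF Qp finM sM that] by (simp add: UQ_def)
  have TP: "(\<Sum>i=j..k. measure M (P i)) = measure M (UP j)" if "1 \<le> j" for j
    using part_sum[OF Pp finM sM that] by (simp add: UP_def)
  have cmp: "measure M (UP j) \<le> measure M (UQ j)" if j: "1 \<le> j" for j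
  proof -
    have sUQ: "UQ j \<in> sets N" using Qp j unfolding UQ_def ordered_partition_def by auto
    have sUP: "UP j \<in> sets N" using Pp j unfolding UP_def ordered_partition_def by auto
    have eq: "measure N (UQ j) = measure N (UP j)"
      using part_sum[OF Qp finN refl j] part_sum[OF Pp finN refl j] Pq Qq j
      by (simp add: UQ_def UP_def)
    have ord: "f y \<le> f x" if x: "x \<in> UQ j" and y: "y \<in> space N - UQ j" for x y
    proof -
      obtain i where i: "i \<in> {j..k}" "x \<in> Q i" using x by (auto simp: UQ_def)
      have "y \<in> (\<Union>i\<in>{1..k}. Q i)" using y Qp by (auto simp: ordered_partition_def)
      then obtain i' where i': "i' \<in> {1..k}" "y \<in> Q i'" by auto
      have "i' < j" using i' y by (auto simp: UQ_def)
      then have "Sup ((\<lambda>x. ereal (f x)) ` Q i') \<le> Inf ((\<lambda>x. ereal (f x)) ` Q i)"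
        using i i' j by (intro Q_sorted) auto
      moreover have "ereal (f y) \<le> Sup ((\<lambda>x. ereal (f x)) ` Q i')" using i' by (intro Sup_upper) auto
      moreover have "Inf ((\<lambda>x. ereal (f x)) ` Q i) \<le> ereal (f x)" using i by (intro Inf_lower) auto
      ultimately have "ereal (f y) \<le> ereal (f x)" by (meson order_trans)
      then show ?thesis by simp
    qed
    have "emeasure M (UP j) \<le> emeasure M (UQ j)"
      unfolding RN by (rule key[OF finN sUQ sUP eq ord f_meas f_nonneg])
    then show ?thesis by (simp add: M.emeasure_eq_measure)
  qed
  define s' where "s' i = (if i = 0 then s 1 else s i)" for i
  have sc: "score M k s R = s 1 * (\<Sum>i=1..k. measure M (R i)) + (\<Sum>j=1..k. (s' j - s' (j-1)) * (\<Sum>i=j..k. measure M (R i)))" for R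
  proof -
    have "score M k s R = (\<Sum>i=1..k. s' i * measure M (R i))"
      unfolding score_def s'_def by (intro sum.cong) auto
    also have "\<dots> = s' 0 * (\<Sum>i=1..k. measure M (R i)) + (\<Sum>j=1..k. (s' j - s' (j-1)) * (\<Sum>i=j..k. measure M (R i)))"
      by (rule abel)
    finally show ?thesis by (simp add: s'_def)
  qed
  have "(\<Sum>j=1..k. (s' j - s' (j-1)) * (\<Sum>i=j..k. measure M (P i))) \<le> (\<Sum>j=1..k. (s' j - s' (j-1)) * (\<Sum>i=j..k. measure M (Q i)))"
  proof (rule sum_mono)
    fix j assume j: "j \<in> {1..k}"
    have d: "s' j - s' (j-1) \<ge> 0"
    proof (cases "j = 1")
      case True then show ?thesis by (simp add: s'_def)
    next
      case False
      then have "1 \<le> j - 1" "j - 1 \<le> k" "j - 1 \<le> j" using j by auto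
      then have "s (j-1) \<le> s j" using j s_mono[of "j-1" j] by auto
      then show ?thesis using False j by (simp add: s'_def)
    qed
    show "(s' j - s' (j-1)) * (\<Sum>i=j..k. measure M (P i)) \<le> (s' j - s' (j-1)) * (\<Sum>i=j..k. measure M (Q i))"
      using j cmp[of j] TP[of j] TQ[of j] d by (auto intro: mult_left_mono)
  qed
  moreover have "(\<Sum>i=1..k. measure M (P i)) = (\<Sum>i=1..k. measure M (Q i))"
    using TP[of 1] TQ[of 1] Pp Qp by (simp add: UP_def UQ_def ordered_partition_def)
  ultimately show "score M k s Q \<ge> score M k s P" unfolding sc by simp
qed

end
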